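(* Let $(X,d)$ be a complete metric space and let $f:\ell_\infty(X)\to X$ satisfy $L_{s,q}(f)<1$ for some $q\in(0,1)$; let $x_*$ be the generalized contractive fixed point of $f$. Fix $x\in X$ and for $n\in\mathbb{N}$ define $f_n:X^n\to X$ by $f_n(x_0,\dots,x_{n-1}):=f(x_0,\dots,x_{n-1},x,x,\dots)$. Then for every $n\in\mathbb{N}$, the Lipschitz constant of $f_n$ with respect to the maximum metric $d_n((x_0,\dots,x_{n-1}),(y_0,\dots,y_{n-1}))=\max_{i<n}d(x_i,y_i)$ on $X^n$ satisfies $\mathrm{Lip}(f_n)\le L_{s,q}(f)$; consequently $f_n$ has a unique point $x_*^n\in X$ with $f_n(x_*^n,\dots,x_*^n)=x_*^n$, and $$d(x_*^n,x_* )\le q^n\frac{L_{s,q}(f)}{1-L_{s,q}(f)}\,d(x_*,x).$$ In particular $x_*^n\to x_*$.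
   Context: $\mathbb{N}^*=\{0,1,2,\dots\}$; $\ell_\infty(X)$ is the set of all bounded sequences $(x_n)_{n\in\mathbb{N}^*}$ in $X$. For $q\in(0,1)$, $d_{s,q}(x,y):=\sup\{q^n d(x_n,y_n):n\in\mathbb{N}^*\}$ and $L_{s,q}(f)$ is the Lipschitz constant of $f$ with respect to $d_{s,q}$ on $\ell_\infty(X)$ and $d$ on $X$. A point $x_*\in X$ is a generalized fixed point of $f$ if $f(x_*,x_*,\dots)=x_*$; a generalized contractive fixed point is one to which, for every starting $x\in\ell_\infty(X)$, the generalized iterates $x^k:=f(\tilde x^{k-1})$, $\tilde x^k:=(f(\tilde x^{k-1}),\tilde x^{k-1}_0,\tilde x^{k-1}_1,\dots)$, $\tilde x^0:=x$, converge (under the hypothesis it exists and is unique). *)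

theory Defs
  imports "HOL-Analysis.Analysis"
begin

definition linf :: "(nat \<Rightarrow> 'a::metric_space) set" where
  "linf = {s. bounded (range s)}"

definition dsq :: "real \<Rightarrow> (nat \<Rightarrow> 'a::metric_space) \<Rightarrow> (nat \<Rightarrow> 'a) \<Rightarrow> real" where
  "dsq q s t = (SUP n. q ^ n * dist (s n) (t n))"

definition Lsq :: "real \<Rightarrow> ((nat \<Rightarrow> 'a::metric_space) \<Rightarrow> 'a) \<Rightarrow> ereal" where
  "Lsq q f = (SUP p \<in> {(s, t). s \<in> linf \<and> t \<in> linf \<and> dsq q s t \<noteq> 0}.
      ereal (dist (f (fst p)) (f (snd p)) / dsq q (fst p) (snd p)))"

text \<open>Maximum metric on X^n, with X^n represented as lists of length n.\<close>
definition dmax :: "nat \<Rightarrow> 'a::metric_space list \<Rightarrow> 'a list \<Rightarrow> real" where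
  "dmax n xs ys = Max ((\<lambda>i. dist (xs ! i) (ys ! i)) ` {..<n})"

definition Lip_n :: "nat \<Rightarrow> ('a::metric_space list \<Rightarrow> 'a) \<Rightarrow> ereal" where
  "Lip_n n g = (SUP p \<in> {(xs, ys). length xs = n \<and> length ys = n \<and> dmax n xs ys \<noteq> 0}.
      ereal (dist (g (fst p)) (g (snd p)) / dmax n (fst p) (snd p)))"

text \<open>Generalized iterates: tilde x^0 = s, tilde x^{k+1} = (f(tilde x^k), tilde x^k_0, tilde x^k_1, ...).
  The iterate x^{k+1} = f(tilde x^k).\<close>
primrec gen_tilde :: "((nat \<Rightarrow> 'a) \<Rightarrow> 'a) \<Rightarrow> (nat \<Rightarrow> 'a) \<Rightarrow> nat \<Rightarrow> (nat \<Rightarrow> 'a)" where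
  "gen_tilde f s 0 = s"
| "gen_tilde f s (Suc k) = (\<lambda>i. if i = 0 then f (gen_tilde f s k) else gen_tilde f s k (i - 1))"

definition gen_fixed_point :: "((nat \<Rightarrow> 'a) \<Rightarrow> 'a) \<Rightarrow> 'a \<Rightarrow> bool" where
  "gen_fixed_point f p \<longleftrightarrow> f (\<lambda>_. p) = p"

definition gen_contractive_fixed_point :: "((nat \<Rightarrow> 'a::metric_space) \<Rightarrow> 'a) \<Rightarrow> 'a \<Rightarrow> bool" where
  "gen_contractive_fixed_point f p \<longleftrightarrow> gen_fixed_point f p \<and>
     (\<forall>s \<in> linf. (\<lambda>k. f (gen_tilde f s k)) \<longlonglongrightarrow> p)"

definition trunc_map :: "((nat \<Rightarrow> 'a) \<Rightarrow> 'a) \<Rightarrow> 'a \<Rightarrow> nat \<Rightarrow> 'a list \<Rightarrow> 'a" where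
  "trunc_map f x n xs = f (\<lambda>i. if i < n then xs ! i else x)"

end

theory Submission
  imports Defs
begin

lemma linf_bdd:
  fixes s t :: "nat \<Rightarrow> 'a::metric_space"
  assumes "s \<in> linf" "t \<in> linf" "0 < q" "q < (1::real)"
  shows "bdd_above (range (\<lambda>n. q ^ n * dist (s n) (t n)))"
proof -
  from assms(1,2) have bs: "bounded (range s)" "bounded (range t)" by (auto simp: linf_def)
  then obtain a B where B: "\<forall>y\<in>range s. dist a y \<le> B" by (auto simp: bounded_def)
  from bs obtain b C where C: "\<forall>y\<in>range t. dist b y \<le> C" by (auto simp: bounded_def)
  have "q ^ n * dist (s n) (t n) \<le> B + dist a b + C" for n
  proof -
    have "dist (s n) (t n) \<le> dist a (s n) + dist a b + dist b (t n)"
      using dist_triangle[of "s n" "t n" a] dist_triangle[of a "t n" b] dist_commute[of "s n" a]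
      by linarith
    also have "\<dots> \<le> B + dist a b + C" using B C by (intro add_mono) auto
    finally have *: "dist (s n) (t n) \<le> B + dist a b + C" .
    have "q ^ n \<le> 1" using assms by (simp add: power_le_one)
    hence "q ^ n * dist (s n) (t n) \<le> 1 * dist (s n) (t n)"
      by (intro mult_right_mono) auto
    with * show ?thesis by simp
  qed
  thus ?thesis by (intro bdd_aboveI2) auto
qed

lemma dsq_ge:
  fixes s t :: "nat \<Rightarrow> 'a::metric_space"
  assumes "s \<in> linf" "t \<in> linf" "0 < q" "q < (1::real)"
  shows "q ^ n * dist (s n) (t n) \<le> dsq q s t"
  unfolding dsq_def by (rule cSUP_upper[OF _ linf_bdd[OF assms]]) auto

lemma dsq_le:
  fixes s t :: "nat \<Rightarrow> 'a::metric_space"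
  assumes "\<And>n. q ^ n * dist (s n) (t n) \<le> B"
  shows "dsq q s t \<le> B"
  unfolding dsq_def by (rule cSUP_least) (use assms in auto)

lemma key:
  fixes f :: "(nat \<Rightarrow> 'a::metric_space) \<Rightarrow> 'a"
  assumes "0 < q" "q < 1" "Lsq q f < 1"
  shows "0 \<le> real_of_ereal (Lsq q f) \<and> real_of_ereal (Lsq q f) < 1 \<and>
    (\<forall>s\<in>linf. \<forall>t\<in>linf. dist (f s) (f t) \<le> real_of_ereal (Lsq q f) * dsq q s t)"
proof -
  define S where "S = {(s::nat\<Rightarrow>'a, t). s \<in> linf \<and> t \<in> linf \<and> dsq q s t \<noteq> 0}"
  define L where "L = Lsq q f"
  have L: "L = (SUP p \<in> S. ereal (dist (f (fst p)) (f (snd p)) / dsq q (fst p) (snd p)))"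
    unfolding L_def S_def Lsq_def by simp
  have up: "ereal (dist (f s) (f t) / dsq q s t) \<le> L" if "(s,t) \<in> S" for s t
    unfolding L using that by (rule SUP_upper2) auto
  show ?thesis
  proof (cases "S = {}")
    case True
    hence "L = -\<infinity>" unfolding L by (simp add: bot_ereal_def)
    hence c0: "real_of_ereal L = 0" by simp
    have "dist (f s) (f t) \<le> 0" if "s \<in> linf" "t \<in> linf" for s t
    proof -
      have "dsq q s t = 0" using True that unfolding S_def by auto
      hence "q ^ n * dist (s n) (t n) \<le> 0" for n using dsq_ge[OF that assms(1,2)] by simp
      hence "dist (s n) (t n) \<le> 0" for n using assms(1) zero_less_power[OF assms(1), of n]
        by (smt (verit) mult_pos_pos zero_le_dist)
      hence "s = t" by (auto intro: ext)
      thus ?thesis by simp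
    qed
    hence d0: "\<forall>s\<in>linf. \<forall>t\<in>linf. dist (f s) (f t) \<le> 0" by blast
    have c0': "real_of_ereal (Lsq q f) = 0" using c0 unfolding L_def .
    show ?thesis
    proof (intro conjI ballI)
      show "0 \<le> real_of_ereal (Lsq q f)" "real_of_ereal (Lsq q f) < 1" unfolding c0' by auto
      fix s t :: "nat \<Rightarrow> 'a" assume "s \<in> linf" "t \<in> linf"
      hence "dist (f s) (f t) \<le> 0" using d0 by blast
      thus "dist (f s) (f t) \<le> real_of_ereal (Lsq q f) * dsq q s t" unfolding c0' by simp
    qed
  next
    case False
    then obtain s0 t0 where st0: "(s0,t0) \<in> S" by auto
    have "0 \<le> ereal (dist (f s0) (f t0) / dsq q s0 t0)"
    proof -
      have "0 \<le> dsq q s0 t0" using st0 dsq_ge[of s0 t0 q 0] assms unfolding S_def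
        by (auto intro: order_trans[OF zero_le_dist])
      thus ?thesis by simp
    qed
    also have "\<dots> \<le> L" using up st0 by blast
    finally have L0: "0 \<le> L" .
    have L1: "L < 1" using assms(3) unfolding L_def .
    have Lfin: "L = ereal (real_of_ereal L)" using L0 L1
      by (cases L) auto
    have c1: "real_of_ereal L < 1" using L0 L1
      by (cases L) auto
    have "dist (f s) (f t) \<le> real_of_ereal L * dsq q s t" if "s \<in> linf" "t \<in> linf" for s t
    proof (cases "dsq q s t = 0")
      case True
      hence "q ^ n * dist (s n) (t n) \<le> 0" for n using dsq_ge[OF that assms(1,2)] by simp
      hence "dist (s n) (t n) \<le> 0" for n using assms(1) zero_less_power[OF assms(1), of n]
        by (smt (verit) mult_pos_pos zero_le_dist)
      hence "s = t" by (auto intro: ext)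
      thus ?thesis using True by simp
    next
      case False
      have pos: "0 < dsq q s t" using False dsq_ge[OF that assms(1,2), of 0]
        using zero_le_dist[of "s 0" "t 0"] by (simp del: zero_le_dist)
      have "ereal (dist (f s) (f t) / dsq q s t) \<le> ereal (real_of_ereal L)"
        using up[of s t] that False Lfin unfolding S_def by auto
      hence "dist (f s) (f t) / dsq q s t \<le> real_of_ereal L" by simp
      thus ?thesis using pos by (simp add: divide_le_eq)
    qed
    hence d1: "\<forall>s\<in>linf. \<forall>t\<in>linf. dist (f s) (f t) \<le> real_of_ereal L * dsq q s t" by blast
    have "0 \<le> real_of_ereal L" using L0 by (simp add: real_of_ereal_pos)
    with d1 c1 show ?thesis unfolding L_def by blast
  qed
qed



lemma ext_linf:
  fixes x :: "'a::metric_space"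
  shows "(\<lambda>i. if i < n then ys ! i else x) \<in> linf"
proof -
  have "range (\<lambda>i. if i < n then ys ! i else x) \<subseteq> insert x ((!) ys ` {..<n})" by auto
  moreover have "bounded (insert x ((!) ys ` {..<n}))" by (intro finite_imp_bounded) auto
  ultimately show ?thesis unfolding linf_def by (auto intro: bounded_subset)
qed

lemma ext_const_linf:
  fixes x :: "'a::metric_space"
  shows "(\<lambda>i. if i < n then p else x) \<in> linf"
proof -
  have "range (\<lambda>i. if i < n then p else x) \<subseteq> {p, x}" by auto
  moreover have "bounded {p, x}" by (intro finite_imp_bounded) auto
  ultimately show ?thesis unfolding linf_def by (auto intro: bounded_subset)
qed

lemma const_linf: "(\<lambda>_. (p::'a::metric_space)) \<in> linf"
  unfolding linf_def by (simp add: finite_imp_bounded)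

lemma dmax_ge:
  assumes "i < n"
  shows "dist (ys ! i) (zs ! i) \<le> dmax n ys zs"
  unfolding dmax_def by (rule Max_ge) (use assms in auto)

lemma Lip_part:
  fixes f :: "(nat \<Rightarrow> 'a::metric_space) \<Rightarrow> 'a"
  assumes q: "0 < q" "q < 1" and n: "n \<ge> 1"
  shows "Lip_n n (trunc_map f x n) \<le> Lsq q f"
  unfolding Lip_n_def
proof (rule SUP_least)
  fix pr :: "'a list \<times> 'a list" assume "pr \<in> {(xs, ys). length xs = n \<and> length ys = (n::nat) \<and> dmax n xs ys \<noteq> 0}"
  then obtain ys zs :: "'a list" where pr: "pr = (ys, zs)" and l: "length ys = n" "length zs = n"
    and dm: "dmax n ys zs \<noteq> 0" by auto
  define s where "s = (\<lambda>i. if i < n then ys ! i else x)"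
  define t where "t = (\<lambda>i. if i < n then zs ! i else x)"
  have st: "s \<in> linf" "t \<in> linf" unfolding s_def t_def by (rule ext_linf)+
  have dm0: "0 \<le> dmax n ys zs" using dmax_ge[of 0 n ys zs] n by (auto intro: order_trans[OF zero_le_dist])
  have dsq_dm: "dsq q s t \<le> dmax n ys zs"
  proof (rule dsq_le)
    fix i
    show "q ^ i * dist (s i) (t i) \<le> dmax n ys zs"
    proof (cases "i < n")
      case True
      have "q ^ i \<le> 1" using q by (simp add: power_le_one)
      hence "q ^ i * dist (s i) (t i) \<le> 1 * dist (s i) (t i)" by (intro mult_right_mono) auto
      also have "\<dots> \<le> dmax n ys zs" using dmax_ge[OF True] True by (simp add: s_def t_def)
      finally show ?thesis .
    next
      case False thus ?thesis using dm0 by (simp add: s_def t_def)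
    qed
  qed
  obtain i where i: "i < n" "dist (ys ! i) (zs ! i) \<noteq> 0"
  proof (rule ccontr)
    assume "\<not> thesis"
    hence "\<forall>i<n. dist (ys ! i) (zs ! i) = 0" using that by blast
    hence "(\<lambda>i. dist (ys ! i) (zs ! i)) ` {..<n} = (\<lambda>i. 0) ` {..<n}"
      by (intro image_cong) auto
    also have "\<dots> = {0}" using n by (auto intro!: image_eqI[of 0 _ 0])
    finally have "(\<lambda>i. dist (ys ! i) (zs ! i)) ` {..<n} = {0}" .
    hence "dmax n ys zs = 0" unfolding dmax_def by simp
    with dm show False by simp
  qed
  have "0 < q ^ i * dist (s i) (t i)" using i q by (simp add: s_def t_def)
  also have "\<dots> \<le> dsq q s t" by (rule dsq_ge[OF st q])
  finally have dpos: "0 < dsq q s t" .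
  have "ereal (dist (f s) (f t) / dsq q s t) \<le> Lsq q f"
    unfolding Lsq_def by (rule SUP_upper2[of "(s,t)"]) (use st dpos in auto)
  moreover have "dist (f s) (f t) / dmax n ys zs \<le> dist (f s) (f t) / dsq q s t"
    by (rule divide_left_mono) (use dsq_dm dpos in auto)
  ultimately have "ereal (dist (f s) (f t) / dmax n ys zs) \<le> Lsq q f"
    by (meson ereal_less_eq(3) order_trans)
  moreover have "trunc_map f x n ys = f s" "trunc_map f x n zs = f t"
    unfolding trunc_map_def s_def t_def by simp_all
  ultimately show "ereal (dist (trunc_map f x n (fst pr)) (trunc_map f x n (snd pr)) /
           dmax n (fst pr) (snd pr)) \<le> Lsq q f" using pr by simp
qed


lemma fix_part:
  fixes f :: "(nat \<Rightarrow> 'a::{metric_space, complete_space}) \<Rightarrow> 'a"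
  assumes q: "0 < q" "q < 1" and L: "Lsq q f < 1" and fp: "f (\<lambda>_. xs) = xs" and n: "n \<ge> 1"
  shows "(\<exists>!p. trunc_map f x n (replicate n p) = p)
          \<and> dist (THE p. trunc_map f x n (replicate n p) = p) xs
              \<le> q ^ n * (real_of_ereal (Lsq q f) / (1 - real_of_ereal (Lsq q f))) * dist xs x"
proof -
  define c where "c = real_of_ereal (Lsq q f)"
  have K: "0 \<le> c" "c < 1" "\<forall>s\<in>linf. \<forall>t\<in>linf. dist (f s) (f t) \<le> c * dsq q s t"
    using key[OF q L] unfolding c_def by auto
  define g where "g = (\<lambda>p. trunc_map f x n (replicate n p))"
  have g: "g p = f (\<lambda>i. if i < n then p else x)" for p
    unfolding g_def trunc_map_def by (intro arg_cong[where f=f]) auto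
  have lip: "dist (g p) (g p') \<le> c * dist p p'" for p p'
  proof -
    have "dist (g p) (g p') \<le> c * dsq q (\<lambda>i. if i < n then p else x) (\<lambda>i. if i < n then p' else x)"
      unfolding g using K(3) ext_const_linf[of n p x] ext_const_linf[of n p' x] by blast
    also have "\<dots> \<le> c * dist p p'"
    proof (rule mult_left_mono[OF dsq_le K(1)])
      fix i
      show "q ^ i * dist (if i < n then p else x) (if i < n then p' else x) \<le> dist p p'"
      proof (cases "i < n")
        case True
        have "q ^ i \<le> 1" using q by (simp add: power_le_one)
        hence "q ^ i * dist p p' \<le> 1 * dist p p'" by (intro mult_right_mono) auto
        thus ?thesis using True by simp
      qed simp
    qed
    finally show ?thesis .
  qed
  have ex: "\<exists>!p. g p = p" by (rule banach_fix_type[OF K(1,2)]) (use lip in auto)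
  define P where "P = (THE p. g p = p)"
  have gP: "g P = P" unfolding P_def using theI'[OF ex] .
  define D where "D = dist P xs"
  define E where "E = q ^ n * dist xs x"
  have E0: "0 \<le> E" using q unfolding E_def by simp
  have "D = dist (f (\<lambda>i. if i < n then P else x)) (f (\<lambda>_. xs))"
    unfolding D_def using gP g[of P] fp by simp
  also have "\<dots> \<le> c * dsq q (\<lambda>i. if i < n then P else x) (\<lambda>_. xs)"
    using K(3) const_linf[of xs] ext_const_linf[of n P x] by blast
  also have "\<dots> \<le> c * max D E"
  proof (rule mult_left_mono[OF dsq_le K(1)])
    fix i
    show "q ^ i * dist (if i < n then P else x) xs \<le> max D E"
    proof (cases "i < n")
      case True
      have "q ^ i \<le> 1" using q by (simp add: power_le_one)
      hence "q ^ i * dist P xs \<le> 1 * dist P xs" by (intro mult_right_mono) auto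
      thus ?thesis using True unfolding D_def by simp
    next
      case False
      have "q ^ i \<le> q ^ n" using False q by (intro power_decreasing) auto
      hence "q ^ i * dist x xs \<le> q ^ n * dist x xs" by (intro mult_right_mono) auto
      thus ?thesis using False unfolding E_def by (simp add: dist_commute)
    qed
  qed
  finally have DE: "D \<le> c * max D E" .
  have "D \<le> E * (c / (1 - c))"
  proof (cases "D \<le> E")
    case True
    hence "D \<le> c * E" using DE by simp
    also have "\<dots> \<le> E * (c / (1 - c))"
    proof -
      have "c * (1 - c) \<le> c" using K by (simp add: mult_left_le)
      hence "c \<le> c / (1 - c)" using K by (simp add: le_divide_eq)
      hence "E * c \<le> E * (c / (1 - c))" using E0 by (rule mult_left_mono)
      thus ?thesis by (subst mult.commute)
    qed
    finally show ?thesis .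
  next
    case False
    hence "D \<le> c * D" using DE by simp
    hence "(1 - c) * D \<le> 0" by (simp add: algebra_simps)
    moreover have "0 \<le> D" unfolding D_def by simp
    ultimately have "D = 0" using K by (simp add: mult_le_0_iff)
    moreover have "0 \<le> E * (c / (1 - c))" using E0 K by simp
    ultimately show ?thesis by simp
  qed
  hence "D \<le> q ^ n * (c / (1 - c)) * dist xs x" unfolding E_def by (simp add: ac_simps)
  thus ?thesis using ex unfolding P_def D_def g_def c_def by blast
qed

theorem mainTheorem15:
  fixes f :: "(nat \<Rightarrow> 'a::{metric_space, complete_space}) \<Rightarrow> 'a"
    and q :: real and xs x :: 'a
  assumes "0 < q" and "q < 1"
    and "Lsq q f < 1"
    and "gen_contractive_fixed_point f xs"
  shows "(\<forall>n::nat. n \<ge> 1 \<longrightarrow>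
            Lip_n n (trunc_map f x n) \<le> Lsq q f
          \<and> (\<exists>!p. trunc_map f x n (replicate n p) = p)
          \<and> dist (THE p. trunc_map f x n (replicate n p) = p) xs
              \<le> q ^ n * (real_of_ereal (Lsq q f) / (1 - real_of_ereal (Lsq q f))) * dist xs x)
       \<and> (\<lambda>n. THE p. trunc_map f x n (replicate n p) = p) \<longlonglongrightarrow> xs"
proof -
  have fp: "f (\<lambda>_. xs) = xs" using assms(4)
    unfolding gen_contractive_fixed_point_def gen_fixed_point_def by simp
  have A: "\<forall>n::nat. n \<ge> 1 \<longrightarrow>
            Lip_n n (trunc_map f x n) \<le> Lsq q f
          \<and> (\<exists>!p. trunc_map f x n (replicate n p) = p)
          \<and> dist (THE p. trunc_map f x n (replicate n p) = p) xs
              \<le> q ^ n * (real_of_ereal (Lsq q f) / (1 - real_of_ereal (Lsq q f))) * dist xs x"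
  proof (intro allI impI conjI)
    fix n :: nat assume n: "1 \<le> n"
    show "Lip_n n (trunc_map f x n) \<le> Lsq q f" by (rule Lip_part[OF assms(1,2) n])
    note F = fix_part[OF assms(1,2,3) fp n, of x]
    show "\<exists>!p. trunc_map f x n (replicate n p) = p" using F by (rule conjunct1)
    show "dist (THE p. trunc_map f x n (replicate n p) = p) xs
              \<le> q ^ n * (real_of_ereal (Lsq q f) / (1 - real_of_ereal (Lsq q f))) * dist xs x"
      using F by (rule conjunct2)
  qed
  define K where "K = (real_of_ereal (Lsq q f) / (1 - real_of_ereal (Lsq q f))) * dist xs x"
  have "(\<lambda>n. q ^ n * K) \<longlonglongrightarrow> 0 * K"
    by (intro tendsto_mult tendsto_const LIMSEQ_power_zero) (use assms in auto)
  hence lim0: "(\<lambda>n. q ^ n * K) \<longlonglongrightarrow> 0" by simp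
  have "(\<lambda>n. dist (THE p. trunc_map f x n (replicate n p) = p) xs) \<longlonglongrightarrow> 0"
  proof (rule Lim_null_comparison[OF _ lim0])
    show "\<forall>\<^sub>F n in sequentially. norm (dist (THE p. trunc_map f x n (replicate n p) = p) xs) \<le> q ^ n * K"
      using eventually_ge_at_top[of "1::nat"]
    proof (rule eventually_mono)
      fix n :: nat assume "1 \<le> n"
      hence "dist (THE p. trunc_map f x n (replicate n p) = p) xs \<le> q ^ n * K"
        using A unfolding K_def by (simp only: mult.assoc)
      thus "norm (dist (THE p. trunc_map f x n (replicate n p) = p) xs) \<le> q ^ n * K"
        by simp
    qed
  qed
  hence "(\<lambda>n. THE p. trunc_map f x n (replicate n p) = p) \<longlonglongrightarrow> xs"
    using tendsto_dist_iff by blast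
  with A show ?thesis by blast
qed

end
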